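(* Let $F$ be a topological hyperfield and $*\in\{s,w\}$. Let $M$ be a rank $r$ matroid on a finite set $E$ such that $\operatorname{Real}^*_F(M)\ne\emptyset$, and let $A\subseteq E$ have $r+1$ elements. Let $\tilde\varphi:A^r\to F$ be an alternating function that is nonzero exactly on the ordered bases of $M$ contained in $A$. Then there is a Grassmann–Plücker function $\varphi:E^r\to F$ of the appropriate type ($*$) that extends $\tilde\varphi$ and satisfies $[\varphi]\in\operatorname{Real}^*_F(M)$.
   Context: Hyperfields. A hyperfield $(F,\odot,\boxplus,1,0)$ has the following data and axioms. - $\odot$ is a commutative multiplication and $\boxplus$ is a hyperaddition assigning to each $x,y$ a nonempty subset $x\boxplus y\subseteq F$ (extended to subsets by unions). - $\boxplus$ is commutative and associative, and $x\boxplus 0=\{x\}$. - Each $x$ has a unique $-x$ with $0\in x\boxplus(-x)$, and $x\in y\boxplus z \iff z\in x\boxplus(-y)$. - $(F\setminus\{0\},\odot,1)$ is an abelian group $F^\times$, $0\odot x=0$, and $x\odot(y\boxplus z)=(x\odot y)\boxplus(x\odot z)$. A topological hyperfield is a hyperfield with a topology in which $F\setminus\{0\}$ is open, multiplication is continuous, and inversion on $F^\times$ is continuous. Grassmannians. A function $\varphi:E^r\to F$ is alternating if permuting arguments by $\sigma$ multiplies the value by $\operatorname{sign}\sigma$. A strong Grassmann–Plücker (GP) function of rank $r$ on $E$ is a function $\varphi:E^r\to F$ with the following properties. - $\varphi$ is not identically $0$. - $\varphi$ is alternating. - For all $(i_1,\dots,i_{r+1})\in E^{r+1}$ and $(j_1,\dots,j_{r-1})\in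 E^{r-1}$: $$0\in\boxplus_{k=1}^{r+1}(-1)^k\varphi(i_1,\dots,\widehat{i_k},\dots,i_{r+1})\odot\varphi(i_k,j_1,\dots,j_{r-1}).$$ A weak GP function is a function $\varphi:E^r\to F$ with the following properties. - $\varphi$ is nonzero and alternating. - Its support is the set of bases of a matroid. - The relation holds when $|\{i\}\setminus\{j\}|=3$. $\operatorname{Gr}^*(r,F^E)$ is the set of strong ($*=s$) or weak ($*=w$) GP functions modulo $\varphi\sim\alpha\varphi$, $\alpha\in F^\times$. Realization spaces. For a matroid $M$ on $E$ of rank $r$, $\operatorname{Real}^*_F(M)$ is the set of $[\varphi]\in\operatorname{Gr}^*(r,F^E)$ such that $\varphi$ is nonzero exactly on the ordered bases of $M$. An ordered basis is an $r$-tuple of distinct elements whose underlying set is a basis. *)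

theory Defs
  imports "HOL-Analysis.Analysis" "HOL-Combinatorics.Permutations"
begin

definition hset_plus :: "('a \<Rightarrow> 'a \<Rightarrow> 'a set) \<Rightarrow> 'a set \<Rightarrow> 'a set \<Rightarrow> 'a set" where
  "hset_plus hp X Y = (\<Union>x\<in>X. \<Union>y\<in>Y. hp x y)"

definition hyperfield ::
  "('a \<Rightarrow> 'a \<Rightarrow> 'a) \<Rightarrow> ('a \<Rightarrow> 'a \<Rightarrow> 'a set) \<Rightarrow> 'a \<Rightarrow> 'a \<Rightarrow> bool" where
  "hyperfield mul hp one zero \<longleftrightarrow>
     (\<forall>x y. mul x y = mul y x) \<and>
     (\<forall>x y. hp x y \<noteq> {}) \<and>
     (\<forall>x y. hp x y = hp y x) \<and>
     (\<forall>x y z. hset_plus hp (hp x y) {z} = hset_plus hp {x} (hp y z)) \<and>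
     (\<forall>x. hp x zero = {x}) \<and>
     (\<forall>x. \<exists>!y. zero \<in> hp x y) \<and>
     (\<forall>x y z. x \<in> hp y z \<longleftrightarrow> z \<in> hp x (THE y'. zero \<in> hp y y')) \<and>

     one \<noteq> zero \<and>
     (\<forall>x y. x \<noteq> zero \<longrightarrow> y \<noteq> zero \<longrightarrow> mul x y \<noteq> zero) \<and>
     (\<forall>x y z. x \<noteq> zero \<longrightarrow> y \<noteq> zero \<longrightarrow> z \<noteq> zero \<longrightarrow>
        mul (mul x y) z = mul x (mul y z)) \<and>
     (\<forall>x. x \<noteq> zero \<longrightarrow> mul one x = x) \<and>
     (\<forall>x. x \<noteq> zero \<longrightarrow> (\<exists>y. y \<noteq> zero \<and> mul x y = one)) \<and>
     (\<forall>x. mul zero x = zero) \<and>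
     (\<forall>x y z. mul x ` (hp y z) = hp (mul x y) (mul x z))"

definition hneg :: "('a \<Rightarrow> 'a \<Rightarrow> 'a set) \<Rightarrow> 'a \<Rightarrow> 'a \<Rightarrow> 'a" where
  "hneg hp zero x = (THE y. zero \<in> hp x y)"

definition hinv :: "('a \<Rightarrow> 'a \<Rightarrow> 'a) \<Rightarrow> 'a \<Rightarrow> 'a \<Rightarrow> 'a \<Rightarrow> 'a" where
  "hinv mul one zero x = (THE y. y \<noteq> zero \<and> mul x y = one)"

definition topological_hyperfield ::
  "'a topology \<Rightarrow> ('a \<Rightarrow> 'a \<Rightarrow> 'a) \<Rightarrow> ('a \<Rightarrow> 'a \<Rightarrow> 'a set) \<Rightarrow> 'a \<Rightarrow> 'a \<Rightarrow> bool" where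
  "topological_hyperfield T mul hp one zero \<longleftrightarrow>
     hyperfield mul hp one zero \<and>
     topspace T = UNIV \<and>
     openin T (UNIV - {zero}) \<and>
     continuous_map (prod_topology T T) T (\<lambda>(x, y). mul x y) \<and>
     continuous_map (subtopology T (UNIV - {zero})) (subtopology T (UNIV - {zero}))
       (hinv mul one zero)"

fun hsum_list :: "('a \<Rightarrow> 'a \<Rightarrow> 'a set) \<Rightarrow> 'a \<Rightarrow> 'a list \<Rightarrow> 'a set" where
  "hsum_list hp zero [] = {zero}"
| "hsum_list hp zero (x # xs) = hset_plus hp {x} (hsum_list hp zero xs)"

definition matroid_bases :: "'e set \<Rightarrow> 'e set set \<Rightarrow> bool" where
  "matroid_bases E \<B> \<longleftrightarrow> finite E \<and> \<B> \<noteq> {} \<and> (\<forall>B\<in>\<B>. B \<subseteq> E) \<and>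
     (\<forall>B1\<in>\<B>. \<forall>B2\<in>\<B>. \<forall>x\<in>B1 - B2. \<exists>y\<in>B2 - B1. insert y (B1 - {x}) \<in> \<B>)"

definition matroid_rank_bases :: "'e set \<Rightarrow> nat \<Rightarrow> 'e set set \<Rightarrow> bool" where
  "matroid_rank_bases E r \<B> \<longleftrightarrow> matroid_bases E \<B> \<and> (\<forall>B\<in>\<B>. card B = r)"

definition ordered_basis :: "'e set set \<Rightarrow> 'e list \<Rightarrow> bool" where
  "ordered_basis \<B> xs \<longleftrightarrow> distinct xs \<and> set xs \<in> \<B>"

text \<open>A function E^r \<rightarrow> F is represented as a function on lists; its domain ii
  tuples (lists) of length r with entries in E. Convention: it is 0 outside the
  domain (extensionality), so functions E^r \<rightarrow> F correspond bijectively.\<close>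

definition tuples :: "'e set \<Rightarrow> nat \<Rightarrow> 'e list set" where
  "tuples E r = {xs. length xs = r \<and> set xs \<subseteq> E}"

definition permute_tuple :: "nat \<Rightarrow> (nat \<Rightarrow> nat) \<Rightarrow> 'e list \<Rightarrow> 'e list" where
  "permute_tuple r \<sigma> xs = map (\<lambda>i. xs ! \<sigma> i) [0..<r]"

definition alternating_on ::
  "('a \<Rightarrow> 'a \<Rightarrow> 'a set) \<Rightarrow> 'a \<Rightarrow> 'e set \<Rightarrow> nat \<Rightarrow> ('e list \<Rightarrow> 'a) \<Rightarrow> bool" where
  "alternating_on hp zero E r \<phi> \<longleftrightarrow>
     (\<forall>xs\<in>tuples E r. \<forall>\<sigma>. \<sigma> permutes {..<r} \<longrightarrow>
        \<phi> (permute_tuple r \<sigma> xs) = (if sign \<sigma> = 1 then \<phi> xs else hneg hp zero (\<phi> xs)))"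

text \<open>The GP relation for i = (i_1..i_{r+1}), j = (j_1..j_{r-1}); with 0-based index k
  the sign (-1)^(k+1) corresponds to (-1)^k with 1-based index.\<close>

definition GP_relation ::
  "('a \<Rightarrow> 'a \<Rightarrow> 'a) \<Rightarrow> ('a \<Rightarrow> 'a \<Rightarrow> 'a set) \<Rightarrow> 'a \<Rightarrow> 'a \<Rightarrow> ('e list \<Rightarrow> 'a)
    \<Rightarrow> 'e list \<Rightarrow> 'e list \<Rightarrow> bool" where
  "GP_relation mul hp one zero \<phi> ii js \<longleftrightarrow>
     zero \<in> hsum_list hp zero
       (map (\<lambda>k. mul (if even (k + 1) then one else hneg hp zero one)
                      (mul (\<phi> (take k ii @ drop (Suc k) ii)) (\<phi> ((ii ! k) # js))))
            [0..<length ii])"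

definition extensional_on :: "'a \<Rightarrow> 'e set \<Rightarrow> nat \<Rightarrow> ('e list \<Rightarrow> 'a) \<Rightarrow> bool" where
  "extensional_on zero E r \<phi> \<longleftrightarrow> (\<forall>xs. xs \<notin> tuples E r \<longrightarrow> \<phi> xs = zero)"

definition strong_GP ::
  "('a \<Rightarrow> 'a \<Rightarrow> 'a) \<Rightarrow> ('a \<Rightarrow> 'a \<Rightarrow> 'a set) \<Rightarrow> 'a \<Rightarrow> 'a \<Rightarrow> 'e set \<Rightarrow> nat
    \<Rightarrow> ('e list \<Rightarrow> 'a) \<Rightarrow> bool" where
  "strong_GP mul hp one zero E r \<phi> \<longleftrightarrow>
     extensional_on zero E r \<phi> \<and>
     (\<exists>xs\<in>tuples E r. \<phi> xs \<noteq> zero) \<and>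
     alternating_on hp zero E r \<phi> \<and>
     (\<forall>ii\<in>tuples E (Suc r). \<forall>js\<in>tuples E (r - 1). GP_relation mul hp one zero \<phi> ii js)"

definition weak_GP ::
  "('a \<Rightarrow> 'a \<Rightarrow> 'a) \<Rightarrow> ('a \<Rightarrow> 'a \<Rightarrow> 'a set) \<Rightarrow> 'a \<Rightarrow> 'a \<Rightarrow> 'e set \<Rightarrow> nat
    \<Rightarrow> ('e list \<Rightarrow> 'a) \<Rightarrow> bool" where
  "weak_GP mul hp one zero E r \<phi> \<longleftrightarrow>
     extensional_on zero E r \<phi> \<and>
     (\<exists>xs\<in>tuples E r. \<phi> xs \<noteq> zero) \<and>
     alternating_on hp zero E r \<phi> \<and>
     (\<exists>\<B>. matroid_bases E \<B> \<and>
        (\<forall>xs\<in>tuples E r. \<phi> xs \<noteq> zero \<longleftrightarrow> ordered_basis \<B> xs)) \<and>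
     (\<forall>ii\<in>tuples E (Suc r). \<forall>js\<in>tuples E (r - 1).
        card (set ii - set js) = 3 \<longrightarrow> GP_relation mul hp one zero \<phi> ii js)"

datatype gp_kind = Strong | Weak

definition GP ::
  "gp_kind \<Rightarrow> ('a \<Rightarrow> 'a \<Rightarrow> 'a) \<Rightarrow> ('a \<Rightarrow> 'a \<Rightarrow> 'a set) \<Rightarrow> 'a \<Rightarrow> 'a \<Rightarrow> 'e set \<Rightarrow> nat
    \<Rightarrow> ('e list \<Rightarrow> 'a) \<Rightarrow> bool" where
  "GP k mul hp one zero E r \<phi> =
     (case k of Strong \<Rightarrow> strong_GP mul hp one zero E r \<phi>
              | Weak \<Rightarrow> weak_GP mul hp one zero E r \<phi>)"

definition proj_class :: "('a \<Rightarrow> 'a \<Rightarrow> 'a) \<Rightarrow> 'a \<Rightarrow> ('e list \<Rightarrow> 'a) \<Rightarrow> ('e list \<Rightarrow> 'a) set" where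
  "proj_class mul zero \<phi> = {(\<lambda>xs. mul \<alpha> (\<phi> xs)) | \<alpha>. \<alpha> \<noteq> zero}"

definition Grassmannian ::
  "gp_kind \<Rightarrow> ('a \<Rightarrow> 'a \<Rightarrow> 'a) \<Rightarrow> ('a \<Rightarrow> 'a \<Rightarrow> 'a set) \<Rightarrow> 'a \<Rightarrow> 'a \<Rightarrow> 'e set \<Rightarrow> nat
    \<Rightarrow> ('e list \<Rightarrow> 'a) set set" where
  "Grassmannian k mul hp one zero E r =
     proj_class mul zero ` {\<phi>. GP k mul hp one zero E r \<phi>}"

definition Real_space ::
  "gp_kind \<Rightarrow> ('a \<Rightarrow> 'a \<Rightarrow> 'a) \<Rightarrow> ('a \<Rightarrow> 'a \<Rightarrow> 'a set) \<Rightarrow> 'a \<Rightarrow> 'a \<Rightarrow> 'e set \<Rightarrow> nat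
    \<Rightarrow> 'e set set \<Rightarrow> ('e list \<Rightarrow> 'a) set set" where
  "Real_space k mul hp one zero E r \<B> =
     proj_class mul zero ` {\<phi>. GP k mul hp one zero E r \<phi> \<and>
        (\<forall>xs\<in>tuples E r. \<phi> xs \<noteq> zero \<longleftrightarrow> ordered_basis \<B> xs)}"

end

theory Submission
  imports Defs
begin

locale hf =
  fixes mul :: "'a \<Rightarrow> 'a \<Rightarrow> 'a" and hp :: "'a \<Rightarrow> 'a \<Rightarrow> 'a set" and one zero :: 'a
  assumes H: "hyperfield mul hp one zero"
begin

lemma Hx: "(\<forall>x y. mul x y = mul y x) \<and> (\<forall>x. mul zero x = zero) \<and>
   (\<forall>x y. x \<noteq> zero \<longrightarrow> y \<noteq> zero \<longrightarrow> mul x y \<noteq> zero) \<and> one \<noteq> zero \<and>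
   (\<forall>x y z. mul x ` (hp y z) = hp (mul x y) (mul x z)) \<and> (\<forall>x. \<exists>!y. zero \<in> hp x y) \<and>
   (\<forall>x y z. x \<noteq> zero \<longrightarrow> y \<noteq> zero \<longrightarrow> z \<noteq> zero \<longrightarrow>
        mul (mul x y) z = mul x (mul y z)) \<and> (\<forall>x. x \<noteq> zero \<longrightarrow> mul one x = x) \<and>
   (\<forall>x. x \<noteq> zero \<longrightarrow> (\<exists>y. y \<noteq> zero \<and> mul x y = one))"
  using H unfolding hyperfield_def by (elim conjE) (intro conjI; assumption)

lemma mcomm: "mul x y = mul y x"
proof - have "\<forall>x y. mul x y = mul y x" using Hx by (elim conjE) assumption then show ?thesis by blast qed
lemma mzero: "mul zero x = zero"
proof - have "\<forall>x. mul zero x = zero" using Hx by (elim conjE) assumption then show ?thesis by blast qed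
lemma mzero': "mul x zero = zero" using mzero[of x] mcomm[of x zero] by simp
lemma mnz: "x \<noteq> zero \<Longrightarrow> y \<noteq> zero \<Longrightarrow> mul x y \<noteq> zero"
proof - have "\<forall>x y. x \<noteq> zero \<longrightarrow> y \<noteq> zero \<longrightarrow> mul x y \<noteq> zero" using Hx by (elim conjE) assumption
  then show "x \<noteq> zero \<Longrightarrow> y \<noteq> zero \<Longrightarrow> mul x y \<noteq> zero" by blast qed
lemma one_nz: "one \<noteq> zero" using Hx by (elim conjE) assumption
lemma dist: "mul x ` (hp y z) = hp (mul x y) (mul x z)"
proof - have "\<forall>x y z. mul x ` (hp y z) = hp (mul x y) (mul x z)" using Hx by (elim conjE) assumption
  then show ?thesis by blast qed
lemma neg_ex1: "\<exists>!y. zero \<in> hp x y"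
proof - have "\<forall>x. \<exists>!y. zero \<in> hp x y" using Hx by (elim conjE) assumption
  then show ?thesis by (rule spec) qed
lemma massoc_nz: "x \<noteq> zero \<Longrightarrow> y \<noteq> zero \<Longrightarrow> z \<noteq> zero \<Longrightarrow> mul (mul x y) z = mul x (mul y z)"
proof - have "\<forall>x y z. x \<noteq> zero \<longrightarrow> y \<noteq> zero \<longrightarrow> z \<noteq> zero \<longrightarrow>
        mul (mul x y) z = mul x (mul y z)" using Hx by (elim conjE) assumption
  then show "x \<noteq> zero \<Longrightarrow> y \<noteq> zero \<Longrightarrow> z \<noteq> zero \<Longrightarrow> mul (mul x y) z = mul x (mul y z)" by blast qed
lemma mone_nz: "x \<noteq> zero \<Longrightarrow> mul one x = x"
proof - have "\<forall>x. x \<noteq> zero \<longrightarrow> mul one x = x" using Hx by (elim conjE) assumption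
  then show "x \<noteq> zero \<Longrightarrow> mul one x = x" by blast qed
lemma inv_ex: "x \<noteq> zero \<Longrightarrow> \<exists>y. y \<noteq> zero \<and> mul x y = one"
proof - have "\<forall>x. x \<noteq> zero \<longrightarrow> (\<exists>y. y \<noteq> zero \<and> mul x y = one)" using Hx by (elim conjE) assumption
  then show "x \<noteq> zero \<Longrightarrow> \<exists>y. y \<noteq> zero \<and> mul x y = one" by blast qed

lemma massoc: "mul (mul x y) z = mul x (mul y z)"
proof (cases "x = zero \<or> y = zero \<or> z = zero")
  case True then show ?thesis by (elim disjE) (simp_all only: mzero mzero')
next
  case False then show ?thesis using massoc_nz by blast
qed

lemma mone: "mul one x = x"
proof (cases "x = zero")
  case True then show ?thesis by (simp add: mzero')
next
  case False then show ?thesis using mone_nz by blast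
qed

sublocale M: comm_monoid_mset mul one
proof
  fix a b c show "mul (mul a b) c = mul a (mul b c)" by (rule massoc)
  show "mul a b = mul b a" by (rule mcomm)
  show "mul a one = a" using mone[of a] mcomm[of a one] by simp
qed

lemma ac4: "mul (mul x a) (mul x b) = mul x (mul x (mul a b))"
  by (metis M.assoc M.left_commute)
lemma ac5: "mul s (mul (mul p a) (mul q b)) = mul (mul p q) (mul s (mul a b))"
  by (metis M.assoc M.left_commute M.commute)

lemma hneg_prop: "zero \<in> hp x (hneg hp zero x)"
  unfolding hneg_def by (rule theI', rule neg_ex1)

lemma hneg_unique: "zero \<in> hp x y \<Longrightarrow> hneg hp zero x = y"
  unfolding hneg_def by (rule the1_equality, rule neg_ex1)

lemma hneg_mul: "mul c (hneg hp zero y) = hneg hp zero (mul c y)"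
proof -
  have "mul c zero \<in> mul c ` hp y (hneg hp zero y)" using hneg_prop by blast
  hence "zero \<in> hp (mul c y) (mul c (hneg hp zero y))" by (simp add: dist mzero')
  thus ?thesis by (rule hneg_unique[symmetric])
qed

definition iv where "iv x = (SOME y. y \<noteq> zero \<and> mul x y = one)"

lemma iv_prop: "x \<noteq> zero \<Longrightarrow> iv x \<noteq> zero \<and> mul x (iv x) = one"
  unfolding iv_def by (rule someI_ex, rule inv_ex)

lemma hsum_map: "hsum_list hp zero (map (mul c) xs) = mul c ` hsum_list hp zero xs"
proof (induction xs)
  case Nil then show ?case by (simp add: mzero')
next
  case (Cons x xs)
  then show ?case by (simp add: hset_plus_def dist[symmetric] image_UN)
qed

lemma F_nz: "(\<forall>x\<in>#N. x \<noteq> zero) \<Longrightarrow> M.F N \<noteq> zero"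
  by (induction N) (auto simp: one_nz mnz)

lemma F_inv:
  assumes "set_mset N \<subseteq> S" "\<forall>e\<in>S. mul (u e) (t e) = one"
  shows "mul (M.F (image_mset u N)) (M.F (image_mset t N)) = one"
proof -
  have "image_mset (\<lambda>x. mul (u x) (t x)) N = image_mset (\<lambda>_. one) N"
    using assms by (intro image_mset_cong) auto
  then have "M.F (image_mset (\<lambda>x. mul (u x) (t x)) N) = one" by simp
  then show ?thesis by (simp add: M.distrib)
qed

lemma GP_alt: "GP k mul hp one zero E r \<phi> \<Longrightarrow> alternating_on hp zero E r \<phi>"
  by (cases k) (auto simp: GP_def strong_GP_def weak_GP_def)

lemma rescale_GP:
  fixes t :: "'e \<Rightarrow> 'a" and \<phi>0 :: "'e list \<Rightarrow> 'a"
  assumes G: "GP k mul hp one zero E r \<phi>0"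
    and t: "\<forall>e. t e \<noteq> zero" and al: "\<alpha> \<noteq> zero"
    and phi: "\<phi> = (\<lambda>xs. mul (mul \<alpha> (M.F (image_mset t (mset xs)))) (\<phi>0 xs))"
  shows "GP k mul hp one zero E r \<phi>"
    and "\<forall>xs. \<phi> xs \<noteq> zero \<longleftrightarrow> \<phi>0 xs \<noteq> zero"
proof -
  define w where "w xs = mul \<alpha> (M.F (image_mset t (mset xs)))" for xs :: "'e list"
  have wnz: "w xs \<noteq> zero" for xs
  proof -
    have "M.F (image_mset t (mset xs)) \<noteq> zero" by (rule F_nz) (use t in auto)
    then show ?thesis unfolding w_def using al by (rule mnz[rotated])
  qed
  have phi': "\<phi> xs = mul (w xs) (\<phi>0 xs)" for xs by (simp add: phi w_def)
  show supp: "\<forall>xs. \<phi> xs \<noteq> zero \<longleftrightarrow> \<phi>0 xs \<noteq> zero"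
  proof
    fix xs show "\<phi> xs \<noteq> zero \<longleftrightarrow> \<phi>0 xs \<noteq> zero"
    proof (cases "\<phi>0 xs = zero")
      case True then show ?thesis by (simp add: phi' mzero')
    next
      case False then show ?thesis using mnz[OF wnz[of xs] False] by (simp add: phi')
    qed
  qed
  have ext: "extensional_on zero E r \<phi>0 \<Longrightarrow> extensional_on zero E r \<phi>"
    by (auto simp: extensional_on_def phi' mzero')
  have nz: "(\<exists>xs\<in>tuples E r. \<phi>0 xs \<noteq> zero) \<Longrightarrow> (\<exists>xs\<in>tuples E r. \<phi> xs \<noteq> zero)"
    using supp by blast
  have alt: "alternating_on hp zero E r \<phi>0 \<Longrightarrow> alternating_on hp zero E r \<phi>"
    unfolding alternating_on_def
  proof (intro ballI allI impI)
    fix xs \<sigma>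
    assume A: "\<forall>xs\<in>tuples E r. \<forall>\<sigma>. \<sigma> permutes {..<r} \<longrightarrow>
        \<phi>0 (permute_tuple r \<sigma> xs) = (if sign \<sigma> = 1 then \<phi>0 xs else hneg hp zero (\<phi>0 xs))"
      and xs: "xs \<in> tuples E r" and s: "\<sigma> permutes {..<r}"
    have len: "length xs = r" using xs by (simp add: tuples_def)
    have pt: "permute_tuple r \<sigma> xs = permute_list \<sigma> xs"
      by (simp add: permute_tuple_def permute_list_def len)
    have "mset (permute_tuple r \<sigma> xs) = mset xs" using s len pt by simp
    then have "w (permute_tuple r \<sigma> xs) = w xs" by (simp add: w_def)
    then show "\<phi> (permute_tuple r \<sigma> xs) = (if sign \<sigma> = 1 then \<phi> xs else hneg hp zero (\<phi> xs))"
      using A xs s by (simp add: phi' hneg_mul)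
  qed
  have gpr: "GP_relation mul hp one zero \<phi>0 ii js \<Longrightarrow> GP_relation mul hp one zero \<phi> ii js" for ii js
  proof -
    assume R: "GP_relation mul hp one zero \<phi>0 ii js"
    define W where "W = mul \<alpha> (mul \<alpha> (M.F (image_mset t (mset ii + mset js))))"
    define sg where "sg k = (if even (k + 1) then one else hneg hp zero one)" for k :: nat
    have trm: "mul (sg k) (mul (\<phi> (take k ii @ drop (Suc k) ii)) (\<phi> ((ii ! k) # js)))
        = mul W (mul (sg k) (mul (\<phi>0 (take k ii @ drop (Suc k) ii)) (\<phi>0 ((ii ! k) # js))))"
      if k: "k < length ii" for k
    proof -
      have ms: "mset (take k ii @ drop (Suc k) ii) + mset (ii ! k # js) = mset ii + mset js"
      proof -
        have "mset ii = mset (take k ii @ ii ! k # drop (Suc k) ii)"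
          using id_take_nth_drop[OF k] by simp
        then show ?thesis by simp
      qed
      have eqW: "mul (w (take k ii @ drop (Suc k) ii)) (w (ii ! k # js)) = W"
      proof -
        have "mul (w (take k ii @ drop (Suc k) ii)) (w (ii ! k # js))
           = mul \<alpha> (mul \<alpha> (M.F (image_mset t (mset (take k ii @ drop (Suc k) ii) + mset (ii ! k # js)))))"
          unfolding w_def image_mset_union M.union by (rule ac4)
        then show ?thesis unfolding ms W_def .
      qed
      show ?thesis unfolding phi' eqW[symmetric] by (rule ac5)
    qed
    define L0 where "L0 = map (\<lambda>k. mul (sg k) (mul (\<phi>0 (take k ii @ drop (Suc k) ii)) (\<phi>0 ((ii ! k) # js)))) [0..<length ii]"
    define L where "L = map (\<lambda>k. mul (sg k) (mul (\<phi> (take k ii @ drop (Suc k) ii)) (\<phi> ((ii ! k) # js)))) [0..<length ii]"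
    have LL: "L = map (mul W) L0" unfolding L_def L0_def by (simp add: trm)
    have z0: "zero \<in> hsum_list hp zero L0"
      using R by (simp add: GP_relation_def sg_def L0_def)
    have "mul W zero \<in> mul W ` hsum_list hp zero L0" using z0 by (rule imageI)
    then have "zero \<in> hsum_list hp zero L" unfolding LL hsum_map mzero' .
    then show ?thesis by (simp add: GP_relation_def sg_def L_def)
  qed
  show "GP k mul hp one zero E r \<phi>"
  proof (cases k)
    case Strong
    have W0: "strong_GP mul hp one zero E r \<phi>0" using G Strong by (simp add: GP_def)
    have e0: "extensional_on zero E r \<phi>0" using W0 unfolding strong_GP_def by (elim conjE) assumption
    have n0: "\<exists>xs\<in>tuples E r. \<phi>0 xs \<noteq> zero" using W0 unfolding strong_GP_def by (elim conjE) assumption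
    have a0: "alternating_on hp zero E r \<phi>0" using W0 unfolding strong_GP_def by (elim conjE) assumption
    have g0: "\<forall>ii\<in>tuples E (Suc r). \<forall>js\<in>tuples E (r - 1). GP_relation mul hp one zero \<phi>0 ii js"
      using W0 unfolding strong_GP_def by (elim conjE) assumption
    have g1: "\<forall>ii\<in>tuples E (Suc r). \<forall>js\<in>tuples E (r - 1). GP_relation mul hp one zero \<phi> ii js"
    proof (intro ballI)
      fix ii js assume "ii \<in> tuples E (Suc r)" "js \<in> tuples E (r - 1)"
      then show "GP_relation mul hp one zero \<phi> ii js" using g0 gpr by blast
    qed
    have "strong_GP mul hp one zero E r \<phi>"
      unfolding strong_GP_def using ext[OF e0] nz[OF n0] alt[OF a0] g1 by (intro conjI)
    then show ?thesis using Strong by (simp add: GP_def)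
  next
    case Weak
    have W0: "weak_GP mul hp one zero E r \<phi>0" using G Weak by (simp add: GP_def)
    have e0: "extensional_on zero E r \<phi>0" using W0 unfolding weak_GP_def by (elim conjE) assumption
    have n0: "\<exists>xs\<in>tuples E r. \<phi>0 xs \<noteq> zero" using W0 unfolding weak_GP_def by (elim conjE) assumption
    have a0: "alternating_on hp zero E r \<phi>0" using W0 unfolding weak_GP_def by (elim conjE) assumption
    have m0: "\<exists>B. matroid_bases E B \<and> (\<forall>xs\<in>tuples E r. \<phi>0 xs \<noteq> zero \<longleftrightarrow> ordered_basis B xs)"
      using W0 unfolding weak_GP_def by (elim conjE) assumption
    have g0: "\<forall>ii\<in>tuples E (Suc r). \<forall>js\<in>tuples E (r - 1).
        card (set ii - set js) = 3 \<longrightarrow> GP_relation mul hp one zero \<phi>0 ii js"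
      using W0 unfolding weak_GP_def by (elim conjE) assumption
    have g1: "\<forall>ii\<in>tuples E (Suc r). \<forall>js\<in>tuples E (r - 1).
        card (set ii - set js) = 3 \<longrightarrow> GP_relation mul hp one zero \<phi> ii js"
    proof (intro ballI impI)
      fix ii js assume "ii \<in> tuples E (Suc r)" "js \<in> tuples E (r - 1)" "card (set ii - set js) = 3"
      then show "GP_relation mul hp one zero \<phi> ii js" using g0 gpr by blast
    qed
    obtain B where B: "matroid_bases E B" "\<forall>xs\<in>tuples E r. \<phi>0 xs \<noteq> zero \<longleftrightarrow> ordered_basis B xs"
      using m0 by blast
    have m1: "\<exists>B. matroid_bases E B \<and> (\<forall>xs\<in>tuples E r. \<phi> xs \<noteq> zero \<longleftrightarrow> ordered_basis B xs)"
    proof (intro exI conjI)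
      show "matroid_bases E B" by (rule B(1))
      show "\<forall>xs\<in>tuples E r. \<phi> xs \<noteq> zero \<longleftrightarrow> ordered_basis B xs" using B(2) supp by simp
    qed
    have "weak_GP mul hp one zero E r \<phi>"
      unfolding weak_GP_def using ext[OF e0] nz[OF n0] alt[OF a0] m1 g1 by (intro conjI)
    then show ?thesis using Weak by (simp add: GP_def)
  qed
qed

end

theorem lemma5p8:
  fixes T :: "'a topology"
    and mul :: "'a \<Rightarrow> 'a \<Rightarrow> 'a" and hp :: "'a \<Rightarrow> 'a \<Rightarrow> 'a set"
    and one zero :: 'a
    and k :: gp_kind
    and E :: "'e set" and r :: nat and \<B> :: "'e set set"
    and A :: "'e set" and \<phi>t :: "'e list \<Rightarrow> 'a"
  assumes "topological_hyperfield T mul hp one zero"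
    and "finite E"
    and "matroid_rank_bases E r \<B>"
    and "Real_space k mul hp one zero E r \<B> \<noteq> {}"
    and "A \<subseteq> E" and "card A = r + 1"
    and "alternating_on hp zero A r \<phi>t"
    and "\<forall>xs\<in>tuples A r. \<phi>t xs \<noteq> zero \<longleftrightarrow> ordered_basis \<B> xs"
  shows "\<exists>\<phi>. GP k mul hp one zero E r \<phi> \<and>
           (\<forall>xs\<in>tuples A r. \<phi> xs = \<phi>t xs) \<and>
           proj_class mul zero \<phi> \<in> Real_space k mul hp one zero E r \<B>"
proof -
  have HF: "hyperfield mul hp one zero" using assms(1) by (simp add: topological_hyperfield_def)
  interpret hf mul hp one zero by (rule hf.intro, rule HF)
  obtain \<phi>0 where G0: "GP k mul hp one zero E r \<phi>0"
    and S0: "\<forall>xs\<in>tuples E r. \<phi>0 xs \<noteq> zero \<longleftrightarrow> ordered_basis \<B> xs"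
    using assms(4) unfolding Real_space_def by blast
  have finA: "finite A" using assms(6) by (intro card_ge_0_finite) simp
  have tupA: "xs \<in> tuples A r \<Longrightarrow> xs \<in> tuples E r" for xs
    using assms(5) by (auto simp: tuples_def)
  define C where "C a = (a \<in> A \<and> A - {a} \<in> \<B>)" for a
  define xa where "xa a = (SOME ys. distinct ys \<and> set ys = A - {a})" for a
  have xa: "distinct (xa a) \<and> set (xa a) = A - {a}" for a
    unfolding xa_def by (rule someI_ex) (use finA finite_distinct_list in blast)
  have xaC: "xa a \<in> tuples A r \<and> ordered_basis \<B> (xa a)" if "C a" for a
  proof -
    have "length (xa a) = card (A - {a})" using xa distinct_card by metis
    also have "\<dots> = r" using that assms(6) finA unfolding C_def by simp
    finally show ?thesis using xa[of a] that unfolding C_def tuples_def ordered_basis_def by auto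
  qed
  have xnz: "\<phi>t (xa a) \<noteq> zero \<and> \<phi>0 (xa a) \<noteq> zero" if "C a" for a
    using xaC[OF that] assms(8) S0 tupA by blast
  define u where "u a = (if C a then mul (\<phi>t (xa a)) (iv (\<phi>0 (xa a))) else one)" for a
  have unz: "u a \<noteq> zero" for a
  proof (cases "C a")
    case True
    have "mul (\<phi>t (xa a)) (iv (\<phi>0 (xa a))) \<noteq> zero"
      using xnz[OF True] iv_prop[of "\<phi>0 (xa a)"] by (intro mnz) auto
    then show ?thesis using True by (simp add: u_def)
  next
    case False then show ?thesis using one_nz by (simp add: u_def)
  qed
  define t where "t e = (if e \<in> A then iv (u e) else one)" for e
  have tnz: "\<forall>e. t e \<noteq> zero" using unz iv_prop one_nz by (simp add: t_def)
  have ut: "\<forall>e\<in>A. mul (u e) (t e) = one" using unz iv_prop by (simp add: t_def)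
  define \<alpha> where "\<alpha> = M.F (image_mset u (mset_set A))"
  have anz: "\<alpha> \<noteq> zero" unfolding \<alpha>_def by (rule F_nz) (simp add: unz)
  define \<phi> where "\<phi> = (\<lambda>xs. mul (mul \<alpha> (M.F (image_mset t (mset xs)))) (\<phi>0 xs))"
  have G: "GP k mul hp one zero E r \<phi>" and supp: "\<forall>xs. \<phi> xs \<noteq> zero \<longleftrightarrow> \<phi>0 xs \<noteq> zero"
    using rescale_GP[OF G0 tnz anz \<phi>_def] by auto
  have S: "\<forall>xs\<in>tuples E r. \<phi> xs \<noteq> zero \<longleftrightarrow> ordered_basis \<B> xs" using S0 supp by blast
  have onxa: "\<phi> (xa a) = \<phi>t (xa a)" if "C a" for a
  proof -
    have aA: "a \<in> A" using that C_def by simp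
    have m: "mset (xa a) = mset_set (A - {a})" using xa[of a] mset_set_set by metis
    have "\<alpha> = mul (u a) (M.F (image_mset u (mset_set (A - {a}))))"
      unfolding \<alpha>_def using mset_set.remove[OF finA aA] by simp
    moreover have "mul (M.F (image_mset u (mset_set (A - {a})))) (M.F (image_mset t (mset_set (A - {a})))) = one"
      by (rule F_inv[OF _ ut]) (use finA in auto)
    ultimately have "mul \<alpha> (M.F (image_mset t (mset (xa a)))) = u a"
      unfolding m by (metis massoc mcomm mone)
    then have "\<phi> (xa a) = mul (u a) (\<phi>0 (xa a))" by (simp add: \<phi>_def)
    also have "\<dots> = \<phi>t (xa a)" using that xnz[OF that] iv_prop[of "\<phi>0 (xa a)"]
      by (simp add: u_def) (metis massoc mcomm mone)
    finally show ?thesis .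
  qed
  have agree: "\<forall>xs\<in>tuples A r. \<phi> xs = \<phi>t xs"
  proof
    fix xs assume xs: "xs \<in> tuples A r"
    show "\<phi> xs = \<phi>t xs"
    proof (cases "\<phi>t xs = zero")
      case True
      then have "\<not> ordered_basis \<B> xs" using assms(8) xs by blast
      then have "\<phi> xs = zero" using S tupA[OF xs] by blast
      then show ?thesis using True by simp
    next
      case False
      then have ob: "ordered_basis \<B> xs" using assms(8) xs by blast
      have len: "length xs = r" and sub: "set xs \<subseteq> A" using xs by (auto simp: tuples_def)
      have dis: "distinct xs" using ob by (simp add: ordered_basis_def)
      have "card (set xs) = r" using dis len distinct_card by metis
      then have "card (A - set xs) = 1" using card_Diff_subset[OF _ sub] assms(6) by simp
      then obtain a where a: "A - set xs = {a}" using card_1_singletonE by blast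
      have sx: "set xs = A - {a}" using a sub by blast
      have Ca: "C a" using a sx ob unfolding C_def ordered_basis_def by auto
      have "mset xs = mset (xa a)" using xa[of a] sx dis mset_set_set by metis
      then obtain p where p: "p permutes {..<length (xa a)}" "permute_list p (xa a) = xs"
        by (rule mset_eq_permutation)
      have lxa: "length (xa a) = r" using xaC[OF Ca] by (simp add: tuples_def)
      have pt: "permute_tuple r p (xa a) = xs"
        using p(2) lxa by (simp add: permute_tuple_def permute_list_def)
      have p': "p permutes {..<r}" using p(1) lxa by simp
      have "\<phi>t xs = (if sign p = 1 then \<phi>t (xa a) else hneg hp zero (\<phi>t (xa a)))"
        using assms(7) xaC[OF Ca] p' pt unfolding alternating_on_def by metis
      moreover have "\<phi> xs = (if sign p = 1 then \<phi> (xa a) else hneg hp zero (\<phi> (xa a)))"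
        using GP_alt[OF G] tupA xaC[OF Ca] p' pt unfolding alternating_on_def by metis
      ultimately show ?thesis using onxa[OF Ca] by simp
    qed
  qed
  have "proj_class mul zero \<phi> \<in> Real_space k mul hp one zero E r \<B>"
    unfolding Real_space_def using G S by blast
  then show ?thesis using G agree by blast
qed

end
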